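(* Let $\Sigma$ be a finite alphabet. For every finite language $S \subseteq \Sigma^*$, the string decomposition cost equals the optimal alignment cost: $c_d(S) = c(S)$.
   Context: String decomposition cost: given strings $w_1,\dots,w_n$ (the elements of $S$), a decomposition consists of strings $x_1,\dots,x_m$ and, for each $i$, an integer $l_i \ge 0$ and a strictly increasing function $p_i:\{1,\dots,l_i\}\to\{1,\dots,m\}$ with $w_i = x_{p_i(1)}x_{p_i(2)}\cdots x_{p_i(l_i)}$. The cost of the decomposition is $\sum_{k=1}^m |x_k|$, and $c_d(w_1,\dots,w_n)=c_d(S)$ is the minimum cost over all decompositions. Alignment cost: an alignment tuple is an element $(u_1,\dots,u_n) \in (\Sigma\cup\{\lambda\})^n \setminus \{\lambda\}^n$ ($\lambda$ the empty string) whose non-$\lambda$ entries are all equal to a single symbol $\sigma\in\Sigma$; an alignment of $w_1,\dots,w_n$ is a sequence $t_1\cdots t_m$ of alignment tuples such that for each $i$ the concatenation of the $i$-th components of $t_1,\dots,t_m$ equals $w_i$; its cost is $m$, and $c(S)$ is the minimum alignment cost. *)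

theory Defs
  imports Main
begin

text \<open>Strings over the alphabet are lists. The strings of the finite language S index
  themselves (w_1,...,w_n are the elements of S).\<close>

definition is_decomposition :: "'a set \<Rightarrow> 'a list set \<Rightarrow> 'a list list \<Rightarrow> ('a list \<Rightarrow> nat list) \<Rightarrow> bool" where
  "is_decomposition \<Sigma> S xs p \<longleftrightarrow>
     (\<forall>x \<in> set xs. x \<in> lists \<Sigma>) \<and>
     (\<forall>w \<in> S. sorted_wrt (<) (p w) \<and> (\<forall>j \<in> set (p w). j < length xs) \<and>
               concat (map (\<lambda>j. xs ! j) (p w)) = w)"

definition decomp_cost :: "'a list list \<Rightarrow> nat" where
  "decomp_cost xs = sum_list (map length xs)"

definition c_d :: "'a set \<Rightarrow> 'a list set \<Rightarrow> nat" where
  "c_d \<Sigma> S = (LEAST k. \<exists>xs p. is_decomposition \<Sigma> S xs p \<and> decomp_cost xs = k)"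

text \<open>An alignment tuple: a component for each w in S, either \<lambda> (None) or a symbol (Some \<sigma>);
  not all components are \<lambda>, and all non-\<lambda> components equal a single symbol of the alphabet.\<close>
definition is_alignment_tuple :: "'a set \<Rightarrow> 'a list set \<Rightarrow> ('a list \<Rightarrow> 'a option) \<Rightarrow> bool" where
  "is_alignment_tuple \<Sigma> S t \<longleftrightarrow>
     (\<exists>w \<in> S. t w \<noteq> None) \<and>
     (\<exists>\<sigma> \<in> \<Sigma>. \<forall>w \<in> S. t w = None \<or> t w = Some \<sigma>)"

definition component_string :: "'a option \<Rightarrow> 'a list" where
  "component_string u = (case u of None \<Rightarrow> [] | Some \<sigma> \<Rightarrow> [\<sigma>])"

definition is_alignment :: "'a set \<Rightarrow> 'a list set \<Rightarrow> ('a list \<Rightarrow> 'a option) list \<Rightarrow> bool" where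
  "is_alignment \<Sigma> S ts \<longleftrightarrow>
     (\<forall>t \<in> set ts. is_alignment_tuple \<Sigma> S t) \<and>
     (\<forall>w \<in> S. concat (map (\<lambda>t. component_string (t w)) ts) = w)"

definition c_align :: "'a set \<Rightarrow> 'a list set \<Rightarrow> nat" where
  "c_align \<Sigma> S = (LEAST m. \<exists>ts. is_alignment \<Sigma> S ts \<and> length ts = m)"

end

theory Submission
  imports Defs
begin

lemma concat_concat': "concat (concat xss) = concat (map concat xss)"
  by (induction xss) auto

lemma concat_filter_upt:
  "concat (map g (filter P [0..<n])) = concat (map (\<lambda>j. if P j then g j else []) [0..<n])"
  by (induction n) auto

lemma map_via_nth: "map f ts = map (\<lambda>j. f (ts ! j)) [0..<length ts]"
  by (rule nth_equalityI) auto

lemma filter_sorted_eq: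
  assumes "sorted_wrt (<) l" "\<forall>j\<in>set l. j < (n::nat)"
  shows "filter (\<lambda>k. k \<in> set l) [0..<n] = l"
proof -
  have "sorted_wrt (<) (filter (\<lambda>k. k \<in> set l) [0..<n])"
    by (simp add: sorted_wrt_filter)
  moreover have "set (filter (\<lambda>k. k \<in> set l) [0..<n]) = set l" using assms(2) by auto
  ultimately show ?thesis using assms(1)
    by (metis strict_sorted_iff sorted_distinct_set_unique)
qed

lemma align_to_dec:
  assumes "is_alignment \<Sigma> S ts"
  shows "\<exists>xs p. is_decomposition \<Sigma> S xs p \<and> decomp_cost xs = length ts"
proof -
  define sym where "sym t = (SOME \<sigma>. \<exists>w\<in>S. t w = Some \<sigma>)" for t :: "'a list \<Rightarrow> 'a option"
  have symP: "component_string (t w) = (if t w \<noteq> None then [sym t] else [])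
      \<and> sym t \<in> \<Sigma>" if "t \<in> set ts" "w \<in> S" for t w
  proof -
    from assms that have tup: "is_alignment_tuple \<Sigma> S t" by (auto simp: is_alignment_def)
    then obtain \<sigma> where s: "\<sigma> \<in> \<Sigma>" "\<forall>w\<in>S. t w = None \<or> t w = Some \<sigma>"
      by (auto simp: is_alignment_tuple_def)
    from tup obtain w0 where "w0 \<in> S" "t w0 \<noteq> None" by (auto simp: is_alignment_tuple_def)
    hence ex: "\<exists>w\<in>S. t w = Some \<sigma>" using s by metis
    have "sym t = \<sigma>"
    proof -
      have "\<exists>w\<in>S. t w = Some (sym t)" unfolding sym_def by (rule someI_ex) (use ex in blast)
      thus ?thesis using s by force
    qed
    thus ?thesis using s that by (auto simp: component_string_def split: option.splits)
  qed
  define xs where "xs = map (\<lambda>t. [sym t]) ts"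
  define p where "p w = filter (\<lambda>k. (ts ! k) w \<noteq> None) [0..<length ts]" for w
  have "is_decomposition \<Sigma> S xs p"
    unfolding is_decomposition_def
  proof (intro conjI ballI)
    fix x assume "x \<in> set xs"
    then obtain t where "t \<in> set ts" "x = [sym t]" by (auto simp: xs_def)
    moreover obtain w where "w \<in> S" using assms \<open>t \<in> set ts\<close>
      by (auto simp: is_alignment_def is_alignment_tuple_def)
    ultimately show "x \<in> lists \<Sigma>" using symP by auto
  next
    fix w assume w: "w \<in> S"
    show "sorted_wrt (<) (p w)" by (simp add: p_def sorted_wrt_filter)
    show "j < length xs" if "j \<in> set (p w)" for j using that by (auto simp: p_def xs_def)
    have "concat (map (\<lambda>j. xs ! j) (p w))
        = concat (map (\<lambda>j. if (ts ! j) w \<noteq> None then [sym (ts ! j)] else []) [0..<length ts])"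
      unfolding p_def concat_filter_upt
      by (intro arg_cong[where f=concat] map_cong) (auto simp: xs_def)
    also have "\<dots> = concat (map (\<lambda>j. component_string ((ts ! j) w)) [0..<length ts])"
      using symP w by (intro arg_cong[where f=concat] map_cong) auto
    also have "\<dots> = concat (map (\<lambda>t. component_string (t w)) ts)"
      by (simp add: map_via_nth[of "\<lambda>t. component_string (t w)" ts])
    also have "\<dots> = w" using assms w by (auto simp: is_alignment_def)
    finally show "concat (map (\<lambda>j. xs ! j) (p w)) = w" .
  qed
  moreover have "decomp_cost xs = length ts"
    by (simp add: decomp_cost_def xs_def comp_def sum_list_triv)
  ultimately show ?thesis by blast
qed

lemma dec_to_align:
  assumes "is_decomposition \<Sigma> S xs p"
  shows "\<exists>ts. is_alignment \<Sigma> S ts \<and> length ts \<le> decomp_cost xs"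
proof -
  define used where "used k = (\<exists>w\<in>S. k \<in> set (p w))" for k
  define blk where "blk k = (if used k then map (\<lambda>i. \<lambda>w. if k \<in> set (p w) then Some (xs ! k ! i) else None)
      [0..<length (xs ! k)] else [])" for k
  define ts where "ts = concat (map blk [0..<length xs])"
  have tup: "is_alignment_tuple \<Sigma> S t" if "t \<in> set ts" for t
  proof -
    from that obtain k i where k: "k < length xs" "used k" "i < length (xs ! k)"
      and t: "t = (\<lambda>w. if k \<in> set (p w) then Some (xs ! k ! i) else None)"
      by (auto simp: ts_def blk_def split: if_splits)
    have "xs ! k \<in> lists \<Sigma>" using assms k(1) by (auto simp: is_decomposition_def)
    hence "xs ! k ! i \<in> \<Sigma>" using k(3) by (auto dest: nth_mem)
    then show ?thesis using k(2) unfolding is_alignment_tuple_def used_def t by auto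
  qed
  have conc: "concat (map (\<lambda>t. component_string (t w)) ts) = w" if w: "w \<in> S" for w
  proof -
    have blkc: "concat (map (\<lambda>t. component_string (t w)) (blk k)) = (if k \<in> set (p w) then xs ! k else [])" for k
    proof -
      have "concat (map (\<lambda>i. [xs ! k ! i]) [0..<length (xs ! k)]) = xs ! k"
      proof -
        have "map (\<lambda>i. xs ! k ! i) [0..<length (xs ! k)] = xs ! k" by (rule map_nth)
        thus ?thesis by (simp only: concat_map_singleton)
      qed
      thus ?thesis using w by (auto simp: blk_def used_def comp_def component_string_def)
    qed
    have "concat (map (\<lambda>t. component_string (t w)) ts)
        = concat (map (\<lambda>k. if k \<in> set (p w) then xs ! k else []) [0..<length xs])"
      by (simp add: ts_def map_concat concat_concat' comp_def blkc)
    also have "\<dots> = concat (map (\<lambda>j. xs ! j) (filter (\<lambda>k. k \<in> set (p w)) [0..<length xs]))"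
      by (simp add: concat_filter_upt)
    also have "filter (\<lambda>k. k \<in> set (p w)) [0..<length xs] = p w"
      using assms w by (intro filter_sorted_eq) (auto simp: is_decomposition_def)
    also have "concat (map (\<lambda>j. xs ! j) (p w)) = w"
      using assms w by (auto simp: is_decomposition_def)
    finally show ?thesis .
  qed
  have "length ts = (\<Sum>k\<leftarrow>[0..<length xs]. length (blk k))"
    by (simp add: ts_def length_concat comp_def)
  also have "\<dots> \<le> (\<Sum>k\<leftarrow>[0..<length xs]. length (xs ! k))"
    by (intro sum_list_mono) (auto simp: blk_def)
  also have "\<dots> = decomp_cost xs"
  proof -
    have "map length xs = map (\<lambda>k. length (xs ! k)) [0..<length xs]" by (rule map_via_nth)
    thus ?thesis by (simp add: decomp_cost_def)
  qed
  finally show ?thesis using tup conc by (auto simp: is_alignment_def)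
qed

theorem lemma3:
  fixes \<Sigma> :: "'a set" and S :: "'a list set"
  assumes "finite \<Sigma>" and "finite S" and "S \<subseteq> lists \<Sigma>"
  shows "c_d \<Sigma> S = c_align \<Sigma> S"
proof -
  obtain xs where xs: "set xs = S" using assms(2) finite_list by blast
  define p where "p w = [SOME j. j < length xs \<and> xs ! j = w]" for w
  have "is_decomposition \<Sigma> S xs p"
    unfolding is_decomposition_def
  proof (intro conjI ballI)
    fix x assume "x \<in> set xs" thus "x \<in> lists \<Sigma>" using xs assms(3) by auto
  next
    fix w assume "w \<in> S"
    hence "\<exists>j. j < length xs \<and> xs ! j = w" using xs by (metis in_set_conv_nth)
    hence "(SOME j. j < length xs \<and> xs ! j = w) < length xs \<and> xs ! (SOME j. j < length xs \<and> xs ! j = w) = w"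
      by (rule someI_ex)
    thus "sorted_wrt (<) (p w)" "concat (map ((!) xs) (p w)) = w"
      by (auto simp: p_def)
    show "j < length xs" if "j \<in> set (p w)" for j using that \<open>(SOME j. _) < _ \<and> _\<close> by (auto simp: p_def)
  qed
  hence ex: "\<exists>k xs p. is_decomposition \<Sigma> S xs p \<and> decomp_cost xs = k" by blast
  let ?D = "\<lambda>k. \<exists>xs p. is_decomposition \<Sigma> S xs p \<and> decomp_cost xs = k"
  let ?A = "\<lambda>m. \<exists>ts. is_alignment \<Sigma> S ts \<and> length ts = m"
  obtain k0 where k0: "?D k0" using ex by blast
  then obtain m0 where m0: "?A m0" using dec_to_align by blast
  have D: "?D (c_d \<Sigma> S)" unfolding c_d_def by (rule LeastI[of ?D k0]) (rule k0)
  have A: "?A (c_align \<Sigma> S)" unfolding c_align_def by (rule LeastI[of ?A m0]) (rule m0)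
  have "c_align \<Sigma> S \<le> c_d \<Sigma> S"
  proof -
    from D obtain xs p where "is_decomposition \<Sigma> S xs p" "decomp_cost xs = c_d \<Sigma> S" by blast
    then obtain ts where "is_alignment \<Sigma> S ts" "length ts \<le> c_d \<Sigma> S" using dec_to_align by metis
    hence "c_align \<Sigma> S \<le> length ts" unfolding c_align_def by (intro Least_le) blast
    thus ?thesis using \<open>length ts \<le> c_d \<Sigma> S\<close> by linarith
  qed
  moreover have "c_d \<Sigma> S \<le> c_align \<Sigma> S"
  proof -
    from A obtain ts where "is_alignment \<Sigma> S ts" "length ts = c_align \<Sigma> S" by blast
    then obtain xs p where "is_decomposition \<Sigma> S xs p" "decomp_cost xs = c_align \<Sigma> S"
      using align_to_dec by metis
    thus ?thesis unfolding c_d_def by (intro Least_le) blast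
  qed
  ultimately show ?thesis by linarith
qed

end
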